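(* Let $A$ be a PI-algebra over $F\in\{\mathbb{R},\mathbb{C}\}$. If $F\langle X\rangle$ is an MN-algebra, then $Id(A)$ is a closed ideal of $F\langle X\rangle$.
   Context: All algebras are non-unitary associative over $F$. $F\langle X\rangle$ is the free non-unitary associative algebra over $F$ on $X=\{x_1,x_2,\dots\}$. For $f=f(x_1,\dots,x_n)$, $f^{(d_1,\dots,d_n)}$ denotes its multihomogeneous component of multidegree $(d_1,\dots,d_n)$ (sum of terms whose monomials contain each $x_i$ exactly $d_i$ times). A norm on $F\langle X\rangle$ is multihomogeneous if $\|f^{(d_1,\dots,d_n)}\|\le\|f\|$ for all $f$ and all multidegrees; $F\langle X\rangle$ is an MN-algebra if it is a normed algebra ($\|fg\|\le\|f\|\|g\|$) for a multihomogeneous norm. $Id(A)$ is the set of $f(x_1,\dots,x_m)\in F\langle X\rangle$ with $f(a_1,\dots,a_m)=0$ for all $a_i\in A$; $A$ is a PI-algebra if $Id(A)\ne\{0\}$. Closed means closed in the norm topology. *)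

theory Defs
  imports Complex_Main
begin

text \<open>The base field F is either the reals or the complex numbers; we represent it as a
  subfield K of the complex numbers with K = range of_real or K = UNIV.\<close>

definition is_R_or_C :: "complex set \<Rightarrow> bool" where
  "is_R_or_C K \<longleftrightarrow> K = range complex_of_real \<or> K = UNIV"

text \<open>The free non-unitary associative algebra F<X> on X = {x_0, x_1, ...}:
  finitely supported coefficient functions on words (lists of variable indices),
  with coefficients in K and zero coefficient on the empty word.\<close>

definition freealg :: "complex set \<Rightarrow> (nat list \<Rightarrow> complex) set" where
  "freealg K = {f. finite {w. f w \<noteq> 0} \<and> f [] = 0 \<and> (\<forall>w. f w \<in> K)}"

definition fa_add :: "(nat list \<Rightarrow> complex) \<Rightarrow> (nat list \<Rightarrow> complex) \<Rightarrow> nat list \<Rightarrow> complex" where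
  "fa_add f g = (\<lambda>w. f w + g w)"

definition fa_smult :: "complex \<Rightarrow> (nat list \<Rightarrow> complex) \<Rightarrow> nat list \<Rightarrow> complex" where
  "fa_smult c f = (\<lambda>w. c * f w)"

definition fa_zero :: "nat list \<Rightarrow> complex" where
  "fa_zero = (\<lambda>w. 0)"

definition fa_mult :: "(nat list \<Rightarrow> complex) \<Rightarrow> (nat list \<Rightarrow> complex) \<Rightarrow> nat list \<Rightarrow> complex" where
  "fa_mult f g = (\<lambda>w. \<Sum>i\<in>{1..<length w}. f (take i w) * g (drop i w))"

definition fa_component :: "(nat \<Rightarrow> nat) \<Rightarrow> (nat list \<Rightarrow> complex) \<Rightarrow> nat list \<Rightarrow> complex" where
  "fa_component d f = (\<lambda>w. if (\<forall>i. count_list w i = d i) then f w else 0)"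

definition is_fa_norm :: "complex set \<Rightarrow> ((nat list \<Rightarrow> complex) \<Rightarrow> real) \<Rightarrow> bool" where
  "is_fa_norm K N \<longleftrightarrow>
     (\<forall>f\<in>freealg K. N f \<ge> 0 \<and> (N f = 0 \<longleftrightarrow> f = fa_zero)) \<and>
     (\<forall>c\<in>K. \<forall>f\<in>freealg K. N (fa_smult c f) = cmod c * N f) \<and>
     (\<forall>f\<in>freealg K. \<forall>g\<in>freealg K. N (fa_add f g) \<le> N f + N g)"

definition is_multihomogeneous_norm :: "complex set \<Rightarrow> ((nat list \<Rightarrow> complex) \<Rightarrow> real) \<Rightarrow> bool" where
  "is_multihomogeneous_norm K N \<longleftrightarrow> is_fa_norm K N \<and>
     (\<forall>f\<in>freealg K. \<forall>d. N (fa_component d f) \<le> N f)"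

definition is_MN_norm :: "complex set \<Rightarrow> ((nat list \<Rightarrow> complex) \<Rightarrow> real) \<Rightarrow> bool" where
  "is_MN_norm K N \<longleftrightarrow> is_multihomogeneous_norm K N \<and>
     (\<forall>f\<in>freealg K. \<forall>g\<in>freealg K. N (fa_mult f g) \<le> N f * N g)"

definition is_MN_algebra :: "complex set \<Rightarrow> bool" where
  "is_MN_algebra K \<longleftrightarrow> (\<exists>N. is_MN_norm K N)"

text \<open>An associative (possibly non-unital) algebra over K: a type of class ring
  (which in Isabelle is non-unital) with a K-scalar multiplication.\<close>
definition is_algebra_over :: "complex set \<Rightarrow> (complex \<Rightarrow> 'b::ring \<Rightarrow> 'b) \<Rightarrow> bool" where
  "is_algebra_over K sm \<longleftrightarrow>
     (\<forall>c\<in>K. \<forall>x y. sm c (x + y) = sm c x + sm c y) \<and>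
     (\<forall>c\<in>K. \<forall>d\<in>K. \<forall>x. sm (c + d) x = sm c x + sm d x) \<and>
     (\<forall>c\<in>K. \<forall>d\<in>K. \<forall>x. sm (c * d) x = sm c (sm d x)) \<and>
     (\<forall>x. sm 1 x = x) \<and>
     (\<forall>c\<in>K. \<forall>x y. sm c (x * y) = sm c x * y \<and> sm c (x * y) = x * sm c y)"

fun wprod :: "'b::ring list \<Rightarrow> 'b" where
  "wprod [] = 0"
| "wprod [x] = x"
| "wprod (x # y # ys) = x * wprod (y # ys)"

definition fa_eval :: "(complex \<Rightarrow> 'b::ring \<Rightarrow> 'b) \<Rightarrow> (nat list \<Rightarrow> complex) \<Rightarrow> (nat \<Rightarrow> 'b) \<Rightarrow> 'b" where
  "fa_eval sm f a = (\<Sum>w\<in>{w. f w \<noteq> 0}. sm (f w) (wprod (map a w)))"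

definition Id_alg :: "complex set \<Rightarrow> (complex \<Rightarrow> 'b::ring \<Rightarrow> 'b) \<Rightarrow> (nat list \<Rightarrow> complex) set" where
  "Id_alg K sm = {f \<in> freealg K. \<forall>a :: nat \<Rightarrow> 'b. fa_eval sm f a = 0}"

definition is_PI_algebra :: "complex set \<Rightarrow> (complex \<Rightarrow> 'b::ring \<Rightarrow> 'b) \<Rightarrow> bool" where
  "is_PI_algebra K sm \<longleftrightarrow> Id_alg K sm \<noteq> {fa_zero}"

definition is_fa_ideal :: "complex set \<Rightarrow> (nat list \<Rightarrow> complex) set \<Rightarrow> bool" where
  "is_fa_ideal K I \<longleftrightarrow> I \<subseteq> freealg K \<and> fa_zero \<in> I \<and>
     (\<forall>f\<in>I. \<forall>g\<in>I. fa_add f g \<in> I) \<and>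
     (\<forall>c\<in>K. \<forall>f\<in>I. fa_smult c f \<in> I) \<and>
     (\<forall>f\<in>I. \<forall>g\<in>freealg K. fa_mult g f \<in> I \<and> fa_mult f g \<in> I)"

definition is_fa_closed :: "complex set \<Rightarrow> ((nat list \<Rightarrow> complex) \<Rightarrow> real) \<Rightarrow> (nat list \<Rightarrow> complex) set \<Rightarrow> bool" where
  "is_fa_closed K N I \<longleftrightarrow>
     (\<forall>g\<in>freealg K. (\<forall>e>0. \<exists>f\<in>I. N (fa_add g (fa_smult (-1) f)) < e) \<longrightarrow> g \<in> I)"

end

theory Submission
  imports Defs "HOL-Analysis.Analysis" "HOL-Library.Multiset"
begin



locale fa_ctx =
  fixes K :: "complex set" and sm :: "complex \<Rightarrow> 'b::ring \<Rightarrow> 'b"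
    and N :: "(nat list \<Rightarrow> complex) \<Rightarrow> real"
  assumes RC: "is_R_or_C K" and ALG: "is_algebra_over K sm" and MN: "is_MN_norm K N"
begin

lemma K_eq: "K = \<real> \<or> K = UNIV" using RC by (auto simp: is_R_or_C_def Reals_def)

lemma K0[simp]: "0 \<in> K" and K1[simp]: "1 \<in> K" using K_eq by auto
lemma Kadd[simp]: "a \<in> K \<Longrightarrow> b \<in> K \<Longrightarrow> a + b \<in> K" using K_eq by auto
lemma Kmult[simp]: "a \<in> K \<Longrightarrow> b \<in> K \<Longrightarrow> a * b \<in> K" using K_eq by auto
lemma Kminus[simp]: "a \<in> K \<Longrightarrow> - a \<in> K" using K_eq by auto
lemma Kdiff[simp]: "a \<in> K \<Longrightarrow> b \<in> K \<Longrightarrow> a - b \<in> K" using K_eq by auto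
lemma Kdiv[simp]: "a \<in> K \<Longrightarrow> b \<in> K \<Longrightarrow> a / b \<in> K" using K_eq by auto
lemma Kpow[simp]: "a \<in> K \<Longrightarrow> a ^ n \<in> K" using K_eq by auto
lemma Knum[simp]: "numeral n \<in> K" using K_eq by auto
lemma Kofreal[simp]: "of_real r \<in> K" using K_eq by auto
lemma Kclosed: "closed K" using K_eq closed_complex_Reals by auto
lemma Ksum[simp]: "(\<And>i. i \<in> A \<Longrightarrow> f i \<in> K) \<Longrightarrow> sum f A \<in> K"
  by (induction A rule: infinite_finite_induct) auto

lemma sm_add: "c \<in> K \<Longrightarrow> sm c (x + y) = sm c x + sm c y"
  using ALG by (auto simp: is_algebra_over_def)
lemma sm_ladd: "c \<in> K \<Longrightarrow> d \<in> K \<Longrightarrow> sm (c + d) x = sm c x + sm d x"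
  using ALG by (auto simp: is_algebra_over_def)
lemma sm_mult: "c \<in> K \<Longrightarrow> d \<in> K \<Longrightarrow> sm (c * d) x = sm c (sm d x)"
  using ALG by (auto simp: is_algebra_over_def)
lemma sm_one[simp]: "sm 1 x = x"
  using ALG by (auto simp: is_algebra_over_def)
lemma sm_assoc1: "c \<in> K \<Longrightarrow> sm c (x * y) = sm c x * y"
  using ALG by (auto simp: is_algebra_over_def)
lemma sm_assoc2: "c \<in> K \<Longrightarrow> sm c (x * y) = x * sm c y"
proof -
  assume c: "c \<in> K"
  have "\<forall>c\<in>K. \<forall>x y. sm c (x*y) = sm c x * y \<and> sm c (x*y) = x * sm c y"
    using ALG unfolding is_algebra_over_def by blast
  then show ?thesis using c by blast
qed
lemma sm_zero_left[simp]: "sm 0 x = 0"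
  using sm_ladd[of 0 0 x] by simp
lemma sm_zero_right[simp]: "c \<in> K \<Longrightarrow> sm c 0 = 0"
  using sm_add[of c 0 0] by simp
lemma sm_sum_right: "c \<in> K \<Longrightarrow> sm c (\<Sum>i\<in>A. x i) = (\<Sum>i\<in>A. sm c (x i))"
  by (induction A rule: infinite_finite_induct) (auto simp: sm_add)
lemma sm_sum_left: "(\<And>i. i \<in> A \<Longrightarrow> c i \<in> K) \<Longrightarrow> sm (\<Sum>i\<in>A. c i) x = (\<Sum>i\<in>A. sm (c i) x)"
  by (induction A rule: infinite_finite_induct) (auto simp: sm_ladd)

lemma freealgD: assumes "f \<in> freealg K"
  shows "finite {w. f w \<noteq> 0}" "f [] = 0" "f w \<in> K"
  using assms by (auto simp: freealg_def)

lemma freealgI: "finite {w. f w \<noteq> 0} \<Longrightarrow> f [] = 0 \<Longrightarrow> (\<And>w. f w \<in> K) \<Longrightarrow> f \<in> freealg K"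
  by (auto simp: freealg_def)

lemma freealg_supp_sub: "finite S \<Longrightarrow> (\<And>w. w \<notin> S \<Longrightarrow> f w = 0) \<Longrightarrow> f [] = 0 \<Longrightarrow> (\<And>w. f w \<in> K) \<Longrightarrow> f \<in> freealg K"
  by (rule freealgI) (auto intro: finite_subset[of _ S])

lemma fa_zero_in[simp]: "fa_zero \<in> freealg K"
  by (auto simp: freealg_def fa_zero_def)

lemma fa_add_in[simp]: "f \<in> freealg K \<Longrightarrow> g \<in> freealg K \<Longrightarrow> fa_add f g \<in> freealg K"
  apply (rule freealg_supp_sub[of "{w. f w \<noteq> 0} \<union> {w. g w \<noteq> 0}"])
  by (auto simp: fa_add_def freealgD)

lemma fa_smult_in[simp]: "c \<in> K \<Longrightarrow> f \<in> freealg K \<Longrightarrow> fa_smult c f \<in> freealg K"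
  apply (rule freealg_supp_sub[of "{w. f w \<noteq> 0}"])
  by (auto simp: fa_smult_def freealgD)

lemma fa_add_apply[simp]: "fa_add f g w = f w + g w" by (simp add: fa_add_def)
lemma fa_smult_apply[simp]: "fa_smult c f w = c * f w" by (simp add: fa_smult_def)
lemma fa_zero_apply[simp]: "fa_zero w = 0" by (simp add: fa_zero_def)

lemma N_nonneg: "f \<in> freealg K \<Longrightarrow> N f \<ge> 0"
  using MN by (auto simp: is_MN_norm_def is_multihomogeneous_norm_def is_fa_norm_def)
lemma N_zero_iff: "f \<in> freealg K \<Longrightarrow> N f = 0 \<longleftrightarrow> f = fa_zero"
  using MN by (auto simp: is_MN_norm_def is_multihomogeneous_norm_def is_fa_norm_def)
lemma N_smult: "c \<in> K \<Longrightarrow> f \<in> freealg K \<Longrightarrow> N (fa_smult c f) = cmod c * N f"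
  using MN by (auto simp: is_MN_norm_def is_multihomogeneous_norm_def is_fa_norm_def)
lemma N_tri: "f \<in> freealg K \<Longrightarrow> g \<in> freealg K \<Longrightarrow> N (fa_add f g) \<le> N f + N g"
  using MN by (auto simp: is_MN_norm_def is_multihomogeneous_norm_def is_fa_norm_def)
lemma N_comp: "f \<in> freealg K \<Longrightarrow> N (fa_component d f) \<le> N f"
  using MN by (auto simp: is_MN_norm_def is_multihomogeneous_norm_def)

abbreviation P where "P a w \<equiv> wprod (map a w)"

lemma eval_superset:
  assumes "finite T" "{w. f w \<noteq> 0} \<subseteq> T"
  shows "fa_eval sm f a = (\<Sum>w\<in>T. sm (f w) (P a w))"
  unfolding fa_eval_def
  by (rule sum.mono_neutral_left) (use assms in auto)

lemma eval_add:
  assumes "f \<in> freealg K" "g \<in> freealg K"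
  shows "fa_eval sm (fa_add f g) a = fa_eval sm f a + fa_eval sm g a"
proof -
  let ?T = "{w. f w \<noteq> 0} \<union> {w. g w \<noteq> 0}"
  have fin: "finite ?T" using assms freealgD by auto
  have "fa_eval sm (fa_add f g) a = (\<Sum>w\<in>?T. sm (f w + g w) (P a w))"
    by (subst eval_superset[OF fin]) auto
  also have "\<dots> = (\<Sum>w\<in>?T. sm (f w) (P a w)) + (\<Sum>w\<in>?T. sm (g w) (P a w))"
    using assms by (simp add: sm_ladd freealgD sum.distrib)
  also have "\<dots> = fa_eval sm f a + fa_eval sm g a"
    using fin by (subst (1 2) eval_superset) auto
  finally show ?thesis .
qed

lemma eval_smult:
  assumes "f \<in> freealg K" "c \<in> K"
  shows "fa_eval sm (fa_smult c f) a = sm c (fa_eval sm f a)"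
proof -
  let ?T = "{w. f w \<noteq> 0}"
  have fin: "finite ?T" using assms freealgD by auto
  have "fa_eval sm (fa_smult c f) a = (\<Sum>w\<in>?T. sm (c * f w) (P a w))"
    by (subst eval_superset[OF fin]) auto
  also have "\<dots> = sm c (fa_eval sm f a)"
    using assms fin by (simp add: sm_mult freealgD sm_sum_right fa_eval_def)
  finally show ?thesis .
qed

lemma eval_zero[simp]: "fa_eval sm fa_zero a = 0"
  by (simp add: fa_eval_def)

lemma wprod_append: "u \<noteq> [] \<Longrightarrow> v \<noteq> [] \<Longrightarrow> wprod (u @ v) = wprod u * wprod v"
proof (induction u rule: wprod.induct)
  case 1 then show ?case by simp
next
  case (2 x) then show ?case by (cases v) auto
next
  case (3 x y ys) then show ?case by (simp add: mult.assoc)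
qed

end


context fa_ctx begin

lemma mult_supp:
  assumes "fa_mult f g w \<noteq> 0"
  shows "w \<in> (\<lambda>(u,v). u @ v) ` ({w. f w \<noteq> 0} \<times> {w. g w \<noteq> 0})"
proof -
  from assms obtain i where "i \<in> {1..<length w}" "f (take i w) * g (drop i w) \<noteq> 0"
    unfolding fa_mult_def by (meson sum.not_neutral_contains_not_neutral)
  then show ?thesis by (intro image_eqI[of _ _ "(take i w, drop i w)"]) auto
qed

lemma fa_mult_in[simp]:
  assumes "f \<in> freealg K" "g \<in> freealg K"
  shows "fa_mult f g \<in> freealg K"
proof (rule freealg_supp_sub)
  show "finite ((\<lambda>(u,v). u @ v) ` ({w. f w \<noteq> 0} \<times> {w. g w \<noteq> 0}))"
    using assms freealgD by auto
  show "fa_mult f g w = 0" if "w \<notin> (\<lambda>(u,v). u @ v) ` ({w. f w \<noteq> 0} \<times> {w. g w \<noteq> 0})" for w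
    using mult_supp that by blast
  show "fa_mult f g [] = 0" by (simp add: fa_mult_def)
  show "fa_mult f g w \<in> K" for w using assms by (simp add: fa_mult_def freealgD)
qed

lemma eval_mult:
  assumes f: "f \<in> freealg K" and g: "g \<in> freealg K"
  shows "fa_eval sm (fa_mult f g) a = fa_eval sm f a * fa_eval sm g a"
proof -
  define Sf where "Sf = {w. f w \<noteq> 0}"
  define Sg where "Sg = {w. g w \<noteq> 0}"
  define T where "T = (\<lambda>(u,v). u @ v) ` (Sf \<times> Sg)"
  define I where "I = (\<lambda>w::nat list. {1..<length w})"
  define H where "H = (\<lambda>(w,i). sm (f (take i w) * g (drop i w)) (P a w))"
  define \<phi> where "\<phi> = (\<lambda>(u::nat list,v::nat list). (u @ v, length u))"
  have finSf: "finite Sf" and finSg: "finite Sg" using f g freealgD Sf_def Sg_def by auto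
  have finT: "finite T" using finSf finSg T_def by auto
  have ne: "u \<noteq> []" if "u \<in> Sf \<union> Sg" for u using that f g freealgD Sf_def Sg_def by auto
  have "fa_eval sm (fa_mult f g) a = (\<Sum>w\<in>T. sm (fa_mult f g w) (P a w))"
    using mult_supp finT by (intro eval_superset) (auto simp: T_def Sf_def Sg_def)
  also have "\<dots> = (\<Sum>w\<in>T. \<Sum>i\<in>I w. H (w,i))"
    using f g by (auto simp: fa_mult_def I_def H_def freealgD intro!: sum.cong sm_sum_left)
  also have "\<dots> = (\<Sum>x\<in>Sigma T I. H x)"
    using finT by (subst sum.Sigma) (auto simp: I_def)
  also have "\<dots> = (\<Sum>x\<in>\<phi> ` (Sf \<times> Sg). H x)"
  proof (rule sum.mono_neutral_right)
    show "finite (Sigma T I)" using finT by (auto simp: I_def)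
    show "\<phi> ` (Sf \<times> Sg) \<subseteq> Sigma T I"
    proof
      fix x assume "x \<in> \<phi> ` (Sf \<times> Sg)"
      then obtain u v where uv: "u \<in> Sf" "v \<in> Sg" "x = (u @ v, length u)" by (auto simp: \<phi>_def)
      then have "u \<noteq> []" "v \<noteq> []" using ne by auto
      then show "x \<in> Sigma T I" using uv by (auto simp: T_def I_def Suc_le_eq)
    qed
    show "\<forall>x\<in>Sigma T I - \<phi> ` (Sf \<times> Sg). H x = 0"
    proof
      fix x assume x: "x \<in> Sigma T I - \<phi> ` (Sf \<times> Sg)"
      obtain w i where wi: "x = (w,i)" by (cases x)
      have "i < length w" using x wi by (auto simp: I_def)
      show "H x = 0"
      proof (cases "take i w \<in> Sf \<and> drop i w \<in> Sg")
        case True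
        then have "x \<in> \<phi> ` (Sf \<times> Sg)" using \<open>i < length w\<close> wi
          by (intro image_eqI[of _ _ "(take i w, drop i w)"]) (auto simp: \<phi>_def)
        then show ?thesis using x by blast
      next
        case False then show ?thesis by (auto simp: wi H_def Sf_def Sg_def)
      qed
    qed
  qed
  also have "\<dots> = (\<Sum>x\<in>Sf \<times> Sg. H (\<phi> x))"
    by (subst sum.reindex) (auto simp: \<phi>_def inj_on_def)
  also have "\<dots> = (\<Sum>u\<in>Sf. \<Sum>v\<in>Sg. sm (f u) (P a u) * sm (g v) (P a v))"
  proof -
    have "H (\<phi> (u,v)) = sm (f u) (P a u) * sm (g v) (P a v)" if "u \<in> Sf" "v \<in> Sg" for u v
    proof -
      have "u \<noteq> []" "v \<noteq> []" using ne that by auto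
      then have "H (\<phi> (u,v)) = sm (f u * g v) (P a u * P a v)"
        by (simp add: H_def \<phi>_def wprod_append)
      also have "\<dots> = sm (f u) (sm (g v) (P a u * P a v))"
        using f g by (simp add: sm_mult freealgD)
      also have "\<dots> = sm (f u) (P a u * sm (g v) (P a v))"
        using f g by (simp add: freealgD sm_assoc2)
      also have "\<dots> = sm (f u) (P a u) * sm (g v) (P a v)"
        using f g by (simp add: freealgD sm_assoc1)
      finally show ?thesis .
    qed
    then have "(\<Sum>x\<in>Sf \<times> Sg. H (\<phi> x)) = (\<Sum>x\<in>Sf \<times> Sg. sm (f (fst x)) (P a (fst x)) * sm (g (snd x)) (P a (snd x)))"
      by (intro sum.cong) auto
    then show ?thesis by (simp add: sum.cartesian_product case_prod_beta)
  qed
  also have "\<dots> = fa_eval sm f a * fa_eval sm g a"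
    by (simp add: fa_eval_def Sf_def Sg_def sum_product)
  finally show ?thesis .
qed

lemma Id_ideal: "is_fa_ideal K (Id_alg K sm)"
  unfolding is_fa_ideal_def Id_alg_def
  by (auto simp: eval_add eval_smult eval_mult)

end



definition sig :: "nat \<Rightarrow> complex \<Rightarrow> (nat list \<Rightarrow> complex) \<Rightarrow> nat list \<Rightarrow> complex" where
  "sig j t f = (\<lambda>w. t ^ count_list w j * f w)"

definition restr :: "nat \<Rightarrow> nat \<Rightarrow> (nat list \<Rightarrow> complex) \<Rightarrow> nat list \<Rightarrow> complex" where
  "restr j k f = (\<lambda>w. if count_list w j = k then f w else 0)"

lemma two_pow_inj: "(2::complex) ^ k = 2 ^ k1 \<longleftrightarrow> k = k1"
proof -
  have "(2::complex) ^ k = of_nat (2 ^ k)" "(2::complex) ^ k1 = of_nat (2 ^ k1)" by simp_all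
  then show ?thesis by (metis of_nat_eq_iff power_inject_exp one_less_numeral_iff semiring_norm(76))
qed

context fa_ctx begin

lemma wprod_subst:
  assumes t: "t \<in> K"
  shows "(w::nat list) \<noteq> [] \<Longrightarrow> P (a(j := sm t (a j))) w = sm (t ^ count_list w j) (P a w)"
proof (induction w rule: induct_list012)
  case 1 then show ?case by simp
next
  case (2 x) then show ?case by auto
next
  case (3 x y ys)
  let ?R = "P a (y # ys)" and ?c = "count_list (y # ys) j"
  have IH: "P (a(j := sm t (a j))) (y # ys) = sm (t ^ ?c) ?R" by (rule 3(2)) simp
  show ?case
  proof (cases "x = j")
    case True
    have "P (a(j := sm t (a j))) (x # y # ys) = sm t (a j) * sm (t ^ ?c) ?R"
      using True IH by simp
    also have "\<dots> = sm t (a j * sm (t ^ ?c) ?R)" using t by (simp add: sm_assoc1)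
    also have "\<dots> = sm t (sm (t ^ ?c) (a j * ?R))" using t by (simp add: sm_assoc2)
    also have "\<dots> = sm (t ^ count_list (x # y # ys) j) (P a (x # y # ys))"
      using t True by (simp add: sm_mult)
    finally show ?thesis .
  next
    case False
    have "P (a(j := sm t (a j))) (x # y # ys) = a x * sm (t ^ ?c) ?R"
      using False IH by simp
    also have "\<dots> = sm (t ^ count_list (x # y # ys) j) (P a (x # y # ys))"
      using t False by (simp add: sm_assoc2)
    finally show ?thesis .
  qed
qed

lemma sig_in[simp]: "f \<in> freealg K \<Longrightarrow> t \<in> K \<Longrightarrow> sig j t f \<in> freealg K"
  apply (rule freealg_supp_sub[of "{w. f w \<noteq> 0}"])
  by (auto simp: sig_def freealgD)

lemma restr_in[simp]: "f \<in> freealg K \<Longrightarrow> restr j k f \<in> freealg K"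
  apply (rule freealg_supp_sub[of "{w. f w \<noteq> 0}"])
  by (auto simp: restr_def freealgD)

lemma eval_sig:
  assumes f: "f \<in> freealg K" and t: "t \<in> K"
  shows "fa_eval sm (sig j t f) a = fa_eval sm f (a(j := sm t (a j)))"
proof -
  let ?T = "{w. f w \<noteq> 0}"
  have fin: "finite ?T" using f freealgD by auto
  have ne: "w \<in> ?T \<Longrightarrow> w \<noteq> []" for w using f freealgD by auto
  have "fa_eval sm (sig j t f) a = (\<Sum>w\<in>?T. sm (t ^ count_list w j * f w) (P a w))"
    by (subst eval_superset[OF fin]) (auto simp: sig_def)
  also have "\<dots> = (\<Sum>w\<in>?T. sm (f w) (P (a(j := sm t (a j))) w))"
    using f t ne by (intro sum.cong) (auto simp: wprod_subst sm_mult freealgD mult.commute)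
  also have "\<dots> = fa_eval sm f (a(j := sm t (a j)))"
    by (simp add: fa_eval_def)
  finally show ?thesis .
qed

lemma Id_sig: "f \<in> Id_alg K sm \<Longrightarrow> t \<in> K \<Longrightarrow> sig j t f \<in> Id_alg K sm"
  by (auto simp: Id_alg_def eval_sig)

lemma Id_add: "f \<in> Id_alg K sm \<Longrightarrow> g \<in> Id_alg K sm \<Longrightarrow> fa_add f g \<in> Id_alg K sm"
  using Id_ideal by (auto simp: is_fa_ideal_def)
lemma Id_smult: "f \<in> Id_alg K sm \<Longrightarrow> c \<in> K \<Longrightarrow> fa_smult c f \<in> Id_alg K sm"
  using Id_ideal by (auto simp: is_fa_ideal_def)
lemma Id_zero: "fa_zero \<in> Id_alg K sm"
  using Id_ideal by (auto simp: is_fa_ideal_def)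
lemma Id_sub: "Id_alg K sm \<subseteq> freealg K"
  by (auto simp: Id_alg_def)

lemma restr_Id_aux:
  "card ((\<lambda>w. count_list w j) ` {w. f w \<noteq> 0}) = n \<Longrightarrow> f \<in> Id_alg K sm \<Longrightarrow> restr j k f \<in> Id_alg K sm"
proof (induction n arbitrary: f rule: less_induct)
  case (less n f)
  define D where "D = (\<lambda>w. count_list w j) ` {w. f w \<noteq> 0}"
  have fI: "f \<in> freealg K" using less.prems Id_sub by auto
  have finD: "finite D" using fI freealgD D_def by auto
  show ?case
  proof (cases "k \<in> D")
    case False
    then have "restr j k f = fa_zero" by (auto simp: restr_def D_def fun_eq_iff)
    then show ?thesis using Id_zero by metis
  next
    case kD: True
    show ?thesis
    proof (cases "D \<subseteq> {k}")
      case True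
      then have "restr j k f = f" by (auto simp: restr_def D_def fun_eq_iff)
      then show ?thesis using less.prems by simp
    next
      case False
      then obtain k1 where k1: "k1 \<in> D" "k1 \<noteq> k" by auto
      define g where "g = fa_add (sig j 2 f) (fa_smult (- (2 ^ k1)) f)"
      have gI: "g \<in> Id_alg K sm" unfolding g_def
        using less.prems by (intro Id_add Id_sig Id_smult) auto
      have gw: "g w = (2 ^ count_list w j - 2 ^ k1) * f w" for w
        by (simp add: g_def sig_def algebra_simps)
      have sub: "(\<lambda>w. count_list w j) ` {w. g w \<noteq> 0} \<subseteq> D - {k1}"
        using gw by (auto simp: D_def)
      have "card ((\<lambda>w. count_list w j) ` {w. g w \<noteq> 0}) < card D"
      proof -
        have "card ((\<lambda>w. count_list w j) ` {w. g w \<noteq> 0}) \<le> card (D - {k1})"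
          using sub finD by (intro card_mono) auto
        also have "\<dots> < card D" using finD k1 by (intro card_Diff1_less)
        finally show ?thesis .
      qed
      then have rg: "restr j k g \<in> Id_alg K sm"
        using less.IH less.prems gI D_def by blast
      have ne: "(2::complex) ^ k - 2 ^ k1 \<noteq> 0" using k1 two_pow_inj by auto
      have eq: "restr j k f = fa_smult (1 / (2 ^ k - 2 ^ k1)) (restr j k g)"
        using ne by (auto simp: restr_def gw fun_eq_iff)
      have "1 / (2 ^ k - 2 ^ k1) \<in> K" by simp
      from Id_smult[OF rg this] show ?thesis unfolding eq .
    qed
  qed
qed

lemma restr_Id: "f \<in> Id_alg K sm \<Longrightarrow> restr j k f \<in> Id_alg K sm"
  using restr_Id_aux by blast

lemma restrs_Id:
  assumes "finite J" "f \<in> Id_alg K sm"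
  shows "(\<lambda>w. if (\<forall>j\<in>J. count_list w j = d j) then f w else 0) \<in> Id_alg K sm"
  using assms(1)
proof (induction J rule: finite_induct)
  case empty
  then show ?case using assms(2) by simp
next
  case (insert j J)
  have "(\<lambda>w. if (\<forall>i\<in>insert j J. count_list w i = d i) then f w else 0) =
        restr j (d j) (\<lambda>w. if (\<forall>j\<in>J. count_list w j = d j) then f w else 0)"
    by (auto simp: restr_def fun_eq_iff)
  then show ?case using insert restr_Id by simp
qed

lemma comp_Id:
  assumes fI: "f \<in> Id_alg K sm"
  shows "fa_component d f \<in> Id_alg K sm"
proof -
  have f: "f \<in> freealg K" using fI Id_sub by auto
  define J where "J = (\<Union>w\<in>{w. f w \<noteq> 0}. set w)"
  have finJ: "finite J" using f freealgD J_def by auto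
  show ?thesis
  proof (cases "\<exists>i. i \<notin> J \<and> d i \<noteq> 0")
    case True
    then obtain i where i: "i \<notin> J" "d i \<noteq> 0" by auto
    have "fa_component d f = fa_zero"
    proof (rule ext)
      fix w
      show "fa_component d f w = fa_zero w"
      proof (cases "f w = 0")
        case False
        then have "i \<notin> set w" using i J_def by auto
        then have "count_list w i = 0" by (simp add: count_list_0_iff)
        then show ?thesis using i by (auto simp: fa_component_def)
      qed (simp add: fa_component_def)
    qed
    then show ?thesis using Id_zero by simp
  next
    case False
    have "fa_component d f = (\<lambda>w. if (\<forall>j\<in>J. count_list w j = d j) then f w else 0)"
    proof (rule ext)
      fix w
      show "fa_component d f w = (if (\<forall>j\<in>J. count_list w j = d j) then f w else 0)"
      proof (cases "f w = 0")
        case nz: False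
        have "count_list w i = d i" if "i \<notin> J" for i
        proof -
          have "i \<notin> set w" using that nz J_def by auto
          then show ?thesis using False that by (auto simp add: count_list_0_iff)
        qed
        then show ?thesis by (auto simp: fa_component_def)
      qed (simp add: fa_component_def)
    qed
    then show ?thesis using restrs_Id[OF finJ fI] by simp
  qed
qed

end



definition VS :: "complex set \<Rightarrow> nat list set \<Rightarrow> (nat list \<Rightarrow> complex) set" where
  "VS K S = {h \<in> freealg K. \<forall>w. w \<notin> S \<longrightarrow> h w = 0}"

definition ev :: "nat list \<Rightarrow> nat list \<Rightarrow> complex" where
  "ev w0 = (\<lambda>w. if w = w0 then 1 else 0)"

abbreviation sub where "sub f g \<equiv> fa_add f (fa_smult (-1) g)"

context fa_ctx begin

lemma ev_in[simp]: "w0 \<noteq> [] \<Longrightarrow> ev w0 \<in> freealg K"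
  by (rule freealg_supp_sub[of "{w0}"]) (auto simp: ev_def)

lemma VS_I: "h \<in> freealg K \<Longrightarrow> (\<And>w. w \<notin> S \<Longrightarrow> h w = 0) \<Longrightarrow> h \<in> VS K S"
  by (auto simp: VS_def)
lemma VS_D: "h \<in> VS K S \<Longrightarrow> h \<in> freealg K" "h \<in> VS K S \<Longrightarrow> w \<notin> S \<Longrightarrow> h w = 0"
  by (auto simp: VS_def)

lemma sub_in[simp]: "f \<in> freealg K \<Longrightarrow> g \<in> freealg K \<Longrightarrow> sub f g \<in> freealg K"
  by simp

lemma N_neg: "f \<in> freealg K \<Longrightarrow> N (fa_smult (-1) f) = N f"
  by (simp add: N_smult)

lemma N_sub_le: "f \<in> freealg K \<Longrightarrow> g \<in> freealg K \<Longrightarrow> N (sub f g) \<le> N f + N g"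
  using N_tri[of f "fa_smult (-1) g"] N_neg[of g] by simp

lemma N_sub_tri: assumes "f \<in> freealg K" "g \<in> freealg K" "h \<in> freealg K"
  shows "N (sub f h) \<le> N (sub f g) + N (sub g h)"
proof -
  have "sub f h = fa_add (sub f g) (sub g h)" by (rule ext) simp
  then show ?thesis using N_tri[of "sub f g" "sub g h"] assms by simp
qed

lemma UB:
  assumes "finite S" "[] \<notin> S"
  shows "h \<in> VS K S \<Longrightarrow> N h \<le> (\<Sum>w\<in>S. cmod (h w) * N (ev w))"
  using assms
proof (induction S arbitrary: h rule: finite_induct)
  case empty
  then have "h = fa_zero" by (auto simp: VS_def fun_eq_iff)
  then show ?case using N_zero_iff[of fa_zero] by (simp del: fa_zero_apply)
next
  case (insert w0 S h)
  define h' where "h' = (\<lambda>w. if w = w0 then 0 else h w)"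
  have hf: "h \<in> freealg K" using insert VS_D by auto
  have h'V: "h' \<in> VS K S"
    using insert hf by (intro VS_I freealg_supp_sub[of "insert w0 S"]) (auto simp: h'_def VS_def freealgD)
  have h'f: "h' \<in> freealg K" using h'V VS_D by auto
  have w0: "w0 \<noteq> []" using insert by auto
  have eq: "h = fa_add (fa_smult (h w0) (ev w0)) h'" by (auto simp: h'_def ev_def fun_eq_iff)
  have "N h \<le> N (fa_smult (h w0) (ev w0)) + N h'"
    by (subst eq, rule N_tri) (use hf w0 h'f freealgD in auto)
  also have "\<dots> = cmod (h w0) * N (ev w0) + N h'" using hf w0 freealgD by (simp add: N_smult)
  also have "N h' \<le> (\<Sum>w\<in>S. cmod (h' w) * N (ev w))" using insert h'V by auto
  also have "(\<Sum>w\<in>S. cmod (h' w) * N (ev w)) = (\<Sum>w\<in>S. cmod (h w) * N (ev w))"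
    using insert by (intro sum.cong) (auto simp: h'_def)
  finally show ?case using insert by simp
qed

end


context fa_ctx begin

lemma VS_mono: "h \<in> VS K S \<Longrightarrow> S \<subseteq> S' \<Longrightarrow> h \<in> VS K S'"
  by (auto simp: VS_def)

lemma LB_step:
  assumes finS: "finite S" and ne: "[] \<notin> insert w0 S" and w0S: "w0 \<notin> S"
    and C'0: "C' \<ge> 0" and IH: "\<forall>h\<in>VS K S. \<forall>w. cmod (h w) \<le> C' * N h"
  shows "\<exists>c\<ge>0. \<forall>h\<in>VS K (insert w0 S). cmod (h w0) \<le> c * N h"
proof (rule ccontr)
  assume neg: "\<not> (\<exists>c\<ge>0. \<forall>h\<in>VS K (insert w0 S). cmod (h w0) \<le> c * N h)"
  have "\<exists>h. h \<in> VS K (insert w0 S) \<and> cmod (h w0) > real (Suc n) * N h" for n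
  proof -
    have "\<not> (\<forall>h\<in>VS K (insert w0 S). cmod (h w0) \<le> real (Suc n) * N h)"
      using neg of_nat_0_le_iff by blast
    then show ?thesis by (auto simp: not_le)
  qed
  then have "\<forall>n. \<exists>h. h \<in> VS K (insert w0 S) \<and> cmod (h w0) > real (Suc n) * N h" by blast
  then have "\<exists>hs. \<forall>n. hs n \<in> VS K (insert w0 S) \<and> cmod (hs n w0) > real (Suc n) * N (hs n)"
    by (rule choice)
  then obtain hs where hs0': "\<forall>n. hs n \<in> VS K (insert w0 S) \<and> cmod (hs n w0) > real (Suc n) * N (hs n)"
    by blast
  then have hs: "\<And>n. hs n \<in> VS K (insert w0 S)" "\<And>n. cmod (hs n w0) > real (Suc n) * N (hs n)"
    by auto
  have w0: "w0 \<noteq> []" using ne by auto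
  have hsf: "hs n \<in> freealg K" for n using hs VS_D by auto
  have hs0: "hs n w0 \<noteq> 0" for n
  proof
    assume "hs n w0 = 0"
    moreover have "real (Suc n) * N (hs n) \<ge> 0" using N_nonneg[OF hsf[of n]] by simp
    ultimately show False using hs(2)[of n] by simp
  qed
  define ks where "ks n = fa_smult (1 / hs n w0) (hs n)" for n
  have ksf: "ks n \<in> freealg K" for n using hsf freealgD by (simp add: ks_def)
  have ksV: "ks n \<in> VS K (insert w0 S)" for n using hs(1)[of n] ksf
    by (auto simp: VS_def ks_def)
  have ks1: "ks n w0 = 1" for n using hs0 by (simp add: ks_def)
  have Nks: "N (ks n) < 1 / real (Suc n)" for n
  proof -
    have "N (ks n) = N (hs n) / cmod (hs n w0)"
      using hsf freealgD by (simp add: ks_def N_smult norm_divide)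
    also have "\<dots> < 1 / real (Suc n)"
    proof -
      have pos: "cmod (hs n w0) > 0" using hs0 by simp
      have "N (hs n) < cmod (hs n w0) / real (Suc n)"
        using hs(2)[of n] by (subst pos_less_divide_eq) (auto simp: algebra_simps)
      then show ?thesis using pos by (simp add: pos_divide_less_eq)
    qed
    finally show ?thesis .
  qed
  have Nks0: "N (ks n) \<ge> 0" for n using N_nonneg ksf by auto
  define rs where "rs n = sub (ks n) (ev w0)" for n
  have rsf: "rs n \<in> freealg K" for n using ksf w0 by (simp add: rs_def)
  have rsV: "rs n \<in> VS K S" for n
    using rsf ksV[of n] ks1[of n] by (auto simp: VS_def rs_def ev_def)
  have rsw: "w \<noteq> w0 \<Longrightarrow> rs n w = ks n w" for n w by (simp add: rs_def ev_def)
  have cau: "Cauchy (\<lambda>n. rs n w)" for w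
  proof (rule CauchyI)
    fix e :: real assume e: "e > 0"
    obtain M where M: "2 * C' / e < real M" using reals_Archimedean2 by blast
    show "\<exists>M. \<forall>m\<ge>M. \<forall>n\<ge>M. norm (rs m w - rs n w) < e"
    proof (intro exI allI impI)
      fix m n assume mn: "M \<le> m" "M \<le> n"
      have dV: "sub (rs m) (rs n) \<in> VS K S"
        using rsV[of m] rsV[of n] rsf by (auto simp: VS_def)
      have deq: "sub (rs m) (rs n) = sub (ks m) (ks n)" by (rule ext) (simp add: rs_def)
      have "norm (rs m w - rs n w) = cmod (sub (rs m) (rs n) w)" by simp
      also have "\<dots> \<le> C' * N (sub (rs m) (rs n))" using IH dV by blast
      also have "\<dots> \<le> C' * (N (ks m) + N (ks n))"
        unfolding deq using C'0 N_sub_le[OF ksf ksf] by (simp add: mult_left_mono)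
      also have "\<dots> \<le> C' * (1 / real (Suc M) + 1 / real (Suc M))"
      proof -
        have "1 / real (Suc m) \<le> 1 / real (Suc M)" "1 / real (Suc n) \<le> 1 / real (Suc M)"
          using mn by (simp_all add: frac_le)
        then show ?thesis using Nks[of m] Nks[of n] C'0 by (intro mult_left_mono) auto
      qed
      also have "\<dots> < e"
      proof (cases "C' = 0")
        case True then show ?thesis using e by simp
      next
        case False
        then have "C' > 0" using C'0 by simp
        have "2 * C' < e * real M" using M e by (simp add: pos_divide_less_eq mult.commute)
        also have "\<dots> < e * real (Suc M)" using e by simp
        finally have "2 * C' < e * real (Suc M)" .
        then have "C' * (2 / real (Suc M)) < e" by (simp add: pos_divide_less_eq mult.commute)
        then show ?thesis by simp
      qed
      finally show "norm (rs m w - rs n w) < e" .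
    qed
  qed
  define L where "L w = lim (\<lambda>n. rs n w)" for w
  have Llim: "(\<lambda>n. rs n w) \<longlonglongrightarrow> L w" for w
    using cau[of w] by (simp add: L_def Cauchy_convergent_iff convergent_LIMSEQ_iff)
  have LK: "L w \<in> K" for w
    by (rule closed_sequentially[OF Kclosed _ Llim[of w]]) (rule freealgD(3)[OF rsf])
  define r where "r = (\<lambda>w. if w \<in> S then L w else 0)"
  have rf: "r \<in> freealg K"
  proof (rule freealg_supp_sub[of S])
    show "finite S" by (rule finS)
    show "r w = 0" if "w \<notin> S" for w using that by (simp add: r_def)
    show "r [] = 0" using ne by (simp add: r_def)
    show "r w \<in> K" for w using LK by (simp add: r_def)
  qed
  have rV: "r \<in> VS K S" using rf by (auto simp: VS_def r_def)
  define q where "q = fa_add (ev w0) r"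
  have qf: "q \<in> freealg K" using rf w0 by (simp add: q_def)
  have q1: "q w0 = 1" using w0S by (simp add: q_def r_def ev_def)
  define X where "X n = 1 / real (Suc n) + (\<Sum>w\<in>S. cmod (L w - rs n w) * N (ev w))" for n
  have bound: "N q \<le> X n" for n
  proof -
    have eq1: "q = fa_add (ks n) (sub q (ks n))" by (rule ext) simp
    have "N (fa_add (ks n) (sub q (ks n))) \<le> N (ks n) + N (sub q (ks n))"
      using ksf qf by (intro N_tri) auto
    then have "N q \<le> N (ks n) + N (sub q (ks n))" by (simp only: eq1[symmetric])
    also have "sub q (ks n) = sub r (rs n)" by (rule ext) (simp add: q_def rs_def)
    also have "N (sub r (rs n)) \<le> (\<Sum>w\<in>S. cmod (sub r (rs n) w) * N (ev w))"
      using finS ne rV rsV rf rsf by (intro UB) (auto simp: VS_def)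
    also have "(\<Sum>w\<in>S. cmod (sub r (rs n) w) * N (ev w)) = (\<Sum>w\<in>S. cmod (L w - rs n w) * N (ev w))"
      by (intro sum.cong) (auto simp: r_def)
    finally show ?thesis using Nks[of n] by (simp add: X_def)
  qed
  have t1: "(\<lambda>n. 1 / real (Suc n)) \<longlonglongrightarrow> 0"
    using LIMSEQ_inverse_real_of_nat by (simp add: inverse_eq_divide)
  have t2: "(\<lambda>n. cmod (L w - rs n w) * N (ev w)) \<longlonglongrightarrow> 0 * N (ev w)" for w
  proof -
    have "(\<lambda>n. L w - rs n w) \<longlonglongrightarrow> L w - L w"
      by (rule tendsto_diff[OF tendsto_const Llim])
    then have "(\<lambda>n. cmod (L w - rs n w)) \<longlonglongrightarrow> cmod (L w - L w)"
      by (rule tendsto_norm)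
    then have "(\<lambda>n. cmod (L w - rs n w)) \<longlonglongrightarrow> 0" by simp
    then show ?thesis by (rule tendsto_mult[OF _ tendsto_const])
  qed
  have "X \<longlonglongrightarrow> 0 + (\<Sum>w\<in>S. 0 * N (ev w))"
    unfolding X_def by (rule tendsto_add[OF t1 tendsto_sum]) (rule t2)
  then have X0: "X \<longlonglongrightarrow> 0" by simp
  have "N q \<le> 0" by (rule LIMSEQ_le_const[OF X0]) (use bound in blast)
  then have "N q = 0" using N_nonneg[OF qf] by simp
  then have "q = fa_zero" using N_zero_iff[OF qf] by simp
  then have "q w0 = 0" by simp
  then show False using q1 by simp
qed

end


context fa_ctx begin

lemma LB:
  assumes "finite S" "[] \<notin> S"
  shows "\<exists>C\<ge>0. \<forall>h\<in>VS K S. \<forall>w. cmod (h w) \<le> C * N h"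
  using assms
proof (induction S rule: finite_induct)
  case empty
  show ?case by (intro exI[of _ 0]) (auto simp: VS_def)
next
  case (insert w0 S)
  obtain C' where C': "C' \<ge> 0" "\<forall>h\<in>VS K S. \<forall>w. cmod (h w) \<le> C' * N h"
    using insert by auto
  obtain c where c: "c \<ge> 0" "\<forall>h\<in>VS K (insert w0 S). cmod (h w0) \<le> c * N h"
    using LB_step[OF insert(1) insert(4) insert(2) C'] by blast
  have w0: "w0 \<noteq> []" using insert by auto
  define Ne where "Ne = N (ev w0)"
  have Ne0: "Ne \<ge> 0" using N_nonneg[OF ev_in[OF w0]] by (simp add: Ne_def)
  define C where "C = C' * (1 + c * Ne) + c"
  have C0: "C \<ge> 0" using C' c Ne0 by (simp add: C_def)
  show ?case
  proof (intro exI[of _ C] conjI ballI allI C0)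
    fix h w assume h: "h \<in> VS K (insert w0 S)"
    have hf: "h \<in> freealg K" using h VS_D by auto
    have Nh: "N h \<ge> 0" using N_nonneg[OF hf] .
    have A: "0 \<le> C' * (1 + c * Ne) * N h" using C' c Ne0 Nh by simp
    have hw0: "cmod (h w0) \<le> c * N h" using c h by blast
    show "cmod (h w) \<le> C * N h"
    proof (cases "w = w0")
      case True
      then show ?thesis using hw0 A by (simp add: C_def algebra_simps)
    next
      case False
      define h' where "h' = fa_add h (fa_smult (- h w0) (ev w0))"
      have h'f: "h' \<in> freealg K" using hf w0 freealgD by (simp add: h'_def)
      have h'V: "h' \<in> VS K S" using h'f h by (auto simp: VS_def h'_def ev_def)
      have "cmod (h w) = cmod (h' w)" using False by (simp add: h'_def ev_def)
      also have "\<dots> \<le> C' * N h'" using C' h'V by blast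
      also have "N h' \<le> N h + cmod (h w0) * Ne"
        unfolding h'_def Ne_def using N_tri[OF hf fa_smult_in[of "- h w0" "ev w0"]] hf w0 freealgD
        by (simp add: N_smult)
      also have "\<dots> \<le> N h + c * N h * Ne" using hw0 Ne0 by (simp add: mult_right_mono)
      finally have "cmod (h w) \<le> C' * (N h + c * N h * Ne)" using C' by (simp add: mult_left_mono)
      also have "\<dots> = C' * (1 + c * Ne) * N h" by (simp add: algebra_simps)
      also have "\<dots> \<le> C * N h" using c Nh by (simp add: C_def algebra_simps)
      finally show ?thesis .
    qed
  qed
qed

lemma CS:
  assumes "finite S" "[] \<notin> S"
  shows "\<And>W g. W \<subseteq> VS K S \<Longrightarrow> fa_zero \<in> W \<Longrightarrow> (\<forall>f\<in>W. \<forall>h\<in>W. fa_add f h \<in> W) \<Longrightarrow>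
     (\<forall>c\<in>K. \<forall>f\<in>W. fa_smult c f \<in> W) \<Longrightarrow> g \<in> VS K S \<Longrightarrow>
     (\<forall>e>0. \<exists>f\<in>W. N (sub g f) < e) \<Longrightarrow> g \<in> W"
  using assms
proof (induction S rule: finite_induct)
  case (empty W g)
  then have "g = fa_zero" by (auto simp: VS_def fun_eq_iff)
  then show ?case using empty.prems(2) by simp
next
  case (insert w0 S W g)
  have w0: "w0 \<noteq> []" using insert.prems(7) by auto
  have gf: "g \<in> freealg K" using insert.prems(5) VS_D by auto
  have Wf: "f \<in> W \<Longrightarrow> f \<in> freealg K" for f using insert.prems(1) VS_D by auto
  have fins: "finite (insert w0 S)" using insert.hyps(1) by simp
  obtain C where C: "C \<ge> 0" "\<forall>h\<in>VS K (insert w0 S). \<forall>w. cmod (h w) \<le> C * N h"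
    using LB[OF fins insert.prems(7)] by blast
  have subV: "f \<in> W \<Longrightarrow> sub g f \<in> VS K (insert w0 S)" for f
    using insert.prems(1,5) Wf gf by (auto simp: VS_def)
  show ?case
  proof (cases "\<forall>f\<in>W. f w0 = 0")
    case True
    have WS: "W \<subseteq> VS K S"
    proof
      fix x assume x: "x \<in> W"
      then have "x \<in> VS K (insert w0 S)" using insert.prems(1) by blast
      moreover have "x w0 = 0" using True x by blast
      ultimately show "x \<in> VS K S" by (auto simp: VS_def)
    qed
    have "cmod (g w0) < d" if d: "d > 0" for d
    proof -
      have "d / (C + 1) > 0" using d C by simp
      then obtain f where f: "f \<in> W" "N (sub g f) < d / (C + 1)" using insert.prems(6) by blast
      have "f w0 = 0" using True f(1) by blast
      then have "cmod (g w0) = cmod (sub g f w0)" by simp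
      also have "\<dots> \<le> C * N (sub g f)" using C subV[OF f(1)] by blast
      also have "\<dots> \<le> (C + 1) * N (sub g f)" using N_nonneg[of "sub g f"] Wf[OF f(1)] gf by (simp add: algebra_simps)
      also have "\<dots> < d" using f(2) C by (simp add: pos_less_divide_eq mult.commute)
      finally show ?thesis .
    qed
    then have "g w0 = 0" by (metis norm_le_zero_iff not_le order_less_irrefl)
    then have gV: "g \<in> VS K S" using insert.prems(5) by (auto simp: VS_def)
    show ?thesis by (rule insert.IH[OF WS insert.prems(2) insert.prems(3) insert.prems(4) gV insert.prems(6)]) (use insert.prems(7) in auto)
  next
    case False
    then obtain u0 where u0: "u0 \<in> W" "u0 w0 \<noteq> 0" by auto
    define u where "u = fa_smult (1 / u0 w0) u0"
    have "1 / u0 w0 \<in> K" using Wf[OF u0(1)] freealgD by simp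
    then have uW: "u \<in> W" unfolding u_def using insert.prems(4) u0(1) by blast
    have uf: "u \<in> freealg K" using Wf uW by auto
    have u1: "u w0 = 1" using u0 by (simp add: u_def)
    define W' where "W' = {f \<in> W. f w0 = 0}"
    have W'S: "W' \<subseteq> VS K S" using insert.prems(1) by (auto simp: VS_def W'_def)
    define pr where "pr f = fa_add f (fa_smult (- f w0) u)" for f
    have prW: "pr f \<in> W'" if f: "f \<in> W" for f
    proof -
      have "- f w0 \<in> K" using Wf[OF f] freealgD by simp
      then have "fa_smult (- f w0) u \<in> W" using insert.prems(4) uW by blast
      then have "pr f \<in> W" unfolding pr_def using insert.prems(3) f by blast
      moreover have "pr f w0 = 0" using u1 by (simp add: pr_def)
      ultimately show ?thesis by (simp add: W'_def)
    qed
    have g'V: "pr g \<in> VS K S"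
    proof (rule VS_I)
      show "pr g \<in> freealg K" using gf uf freealgD by (simp add: pr_def)
      fix w assume w: "w \<notin> S"
      show "pr g w = 0"
      proof (cases "w = w0")
        case True then show ?thesis using u1 by (simp add: pr_def)
      next
        case False
        have "u \<in> VS K (insert w0 S)" using insert.prems(1) uW by blast
        then have "u w = 0" using w False VS_D by auto
        moreover have "g w = 0" using insert.prems(5) w False VS_D by auto
        ultimately show ?thesis by (simp add: pr_def)
      qed
    qed
    have Nu: "N u \<ge> 0" using N_nonneg[OF uf] .
    have "\<forall>e>0. \<exists>f\<in>W'. N (sub (pr g) f) < e"
    proof (intro allI impI)
      fix e :: real assume e: "e > 0"
      define d where "d = e / (1 + C * N u)"
      have dp: "1 + C * N u > 0" using C(1) Nu by (simp add: add_pos_nonneg)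
      then have dpos: "d > 0" using e by (simp add: d_def)
      obtain f where f: "f \<in> W" "N (sub g f) < d" using insert.prems(6) dpos by blast
      have ff: "f \<in> freealg K" using Wf f by auto
      have eq: "sub (pr g) (pr f) = fa_add (sub g f) (fa_smult (- (sub g f w0)) u)"
        by (rule ext) (simp add: pr_def algebra_simps)
      have sf: "sub g f \<in> freealg K" using gf ff by simp
      have "N (sub (pr g) (pr f)) \<le> N (sub g f) + cmod (sub g f w0) * N u"
      proof -
        have "- (sub g f w0) \<in> K" using gf ff freealgD by simp
        then show ?thesis
          unfolding eq using N_tri[OF sf fa_smult_in[of "- (sub g f w0)" u]] uf sf
          by (simp add: N_smult del: fa_add_apply fa_smult_apply)
      qed
      also have "\<dots> \<le> N (sub g f) + C * N (sub g f) * N u"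
      proof -
        have "cmod (sub g f w0) \<le> C * N (sub g f)" using C(2) subV[OF f(1)] by blast
        then show ?thesis using Nu by (simp add: mult_right_mono del: fa_add_apply fa_smult_apply)
      qed
      also have "\<dots> = (1 + C * N u) * N (sub g f)" by (simp add: algebra_simps)
      also have "\<dots> < e" using f(2) dp by (simp add: d_def pos_less_divide_eq mult.commute)
      finally show "\<exists>f\<in>W'. N (sub (pr g) f) < e" using prW[OF f(1)] by blast
    qed
    moreover have "fa_zero \<in> W'" using insert.prems(2) unfolding W'_def by (simp add: fa_zero_def)
    moreover have "\<forall>f\<in>W'. \<forall>h\<in>W'. fa_add f h \<in> W'"
    proof (intro ballI)
      fix f h assume "f \<in> W'" "h \<in> W'"
      then have a1: "f \<in> W" "h \<in> W" "f w0 = 0" "h w0 = 0" unfolding W'_def by auto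
      then have "fa_add f h \<in> W" using insert.prems(3) by blast
      moreover have "fa_add f h w0 = 0" using a1 by simp
      ultimately have "fa_add f h \<in> W" "fa_add f h w0 = 0" by auto
      then show "fa_add f h \<in> W'" unfolding W'_def by blast
    qed
    moreover have "\<forall>c\<in>K. \<forall>f\<in>W'. fa_smult c f \<in> W'"
    proof (intro ballI)
      fix c f assume "c \<in> K" "f \<in> W'"
      then have a1: "c \<in> K" "f \<in> W" "f w0 = 0" unfolding W'_def by auto
      then have "fa_smult c f \<in> W" using insert.prems(4) by blast
      moreover have "fa_smult c f w0 = 0" using a1 by simp
      ultimately have "fa_smult c f \<in> W" "fa_smult c f w0 = 0" by auto
      then show "fa_smult c f \<in> W'" unfolding W'_def by blast
    qed
    moreover have "[] \<notin> S" using insert.prems(7) by simp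
    ultimately have "pr g \<in> W'" using insert.IH[OF W'S _ _ _ g'V] by blast
    then have prgW: "pr g \<in> W" by (simp add: W'_def)
    have "g = fa_add (pr g) (fa_smult (g w0) u)" by (rule ext) (simp add: pr_def)
    also have "\<dots> \<in> W"
    proof -
      have "g w0 \<in> K" using gf freealgD by simp
      then have "fa_smult (g w0) u \<in> W" using insert.prems(4) uW by blast
      then show ?thesis using insert.prems(3) prgW by blast
    qed
    finally show ?thesis .
  qed
qed

end


context fa_ctx begin

lemma comp_eq: "fa_component d f = (\<lambda>w. if count_list w = d then f w else 0)"
  by (auto simp: fa_component_def fun_eq_iff)

lemma comp_in: "f \<in> freealg K \<Longrightarrow> fa_component d f \<in> freealg K"
  unfolding comp_eq
  by (rule freealg_supp_sub[of "{w. f w \<noteq> 0}"]) (auto simp: freealgD)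

lemma finite_count_class:
  "finite {w. count_list w = count_list (w0::nat list)}"
proof (rule finite_subset[OF _ finite_lists_length_eq[of "set w0" "length w0"]])
  show "{w. count_list w = count_list w0} \<subseteq> {xs. set xs \<subseteq> set w0 \<and> length xs = length w0}"
  proof
    fix w assume "w \<in> {w. count_list w = count_list w0}"
    then have "mset w = mset w0" by (auto intro!: multiset_eqI simp: count_mset)
    then show "w \<in> {xs. set xs \<subseteq> set w0 \<and> length xs = length w0}"
      by (auto dest: mset_eq_setD mset_eq_length)
  qed
qed simp

lemma Id_closed:
  assumes gf: "g \<in> freealg K" and appr: "\<forall>e>0. \<exists>f\<in>Id_alg K sm. N (sub g f) < e"
  shows "g \<in> Id_alg K sm"
proof -
  define S where "S = {w. g w \<noteq> 0}"
  define D where "D = count_list ` S"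
  have finS: "finite S" using gf freealgD S_def by auto
  have compI: "fa_component d g \<in> Id_alg K sm" if dD: "d \<in> D" for d
  proof -
    obtain w0 where w0: "w0 \<in> S" "d = count_list w0" using dD D_def by auto
    define Sd where "Sd = {w. count_list w = d} - {[]}"
    have finSd: "finite Sd" using finite_count_class[of w0] w0 by (simp add: Sd_def)
    have neSd: "[] \<notin> Sd" by (simp add: Sd_def)
    define W where "W = Id_alg K sm \<inter> VS K Sd"
    have compV: "fa_component d f \<in> VS K Sd" if "f \<in> freealg K" for f
    proof (rule VS_I)
      show "fa_component d f \<in> freealg K" using comp_in that .
      fix w assume "w \<notin> Sd"
      then show "fa_component d f w = 0" using that freealgD
        by (auto simp: Sd_def comp_eq)
    qed
    have WV: "W \<subseteq> VS K Sd" by (simp add: W_def)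
    have W0: "fa_zero \<in> W" unfolding W_def using Id_zero
      by (auto intro!: VS_I simp del: fa_zero_apply) (simp add: fa_zero_def)
    have Wadd: "\<forall>f\<in>W. \<forall>h\<in>W. fa_add f h \<in> W"
    proof (intro ballI)
      fix f h assume fh: "f \<in> W" "h \<in> W"
      then have "fa_add f h \<in> Id_alg K sm" using Id_add unfolding W_def by blast
      moreover have "fa_add f h \<in> VS K Sd" using fh unfolding W_def VS_def by auto
      ultimately show "fa_add f h \<in> W" unfolding W_def by blast
    qed
    have Wsm: "\<forall>c\<in>K. \<forall>f\<in>W. fa_smult c f \<in> W"
    proof (intro ballI)
      fix c f assume cf: "c \<in> K" "f \<in> W"
      then have "fa_smult c f \<in> Id_alg K sm" using Id_smult unfolding W_def by blast
      moreover have "fa_smult c f \<in> VS K Sd" using cf unfolding W_def VS_def by auto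
      ultimately show "fa_smult c f \<in> W" unfolding W_def by blast
    qed
    have gV: "fa_component d g \<in> VS K Sd" using compV[OF gf] .
    have ap: "\<forall>e>0. \<exists>f\<in>W. N (sub (fa_component d g) f) < e"
    proof (intro allI impI)
      fix e :: real assume "e > 0"
      then obtain f where f: "f \<in> Id_alg K sm" "N (sub g f) < e" using appr by blast
      have ff: "f \<in> freealg K" using f Id_sub by auto
      have fW: "fa_component d f \<in> W" unfolding W_def using comp_Id[OF f(1)] compV[OF ff] by blast
      have "sub (fa_component d g) (fa_component d f) = fa_component d (sub g f)"
        by (auto simp: comp_eq fun_eq_iff)
      then have "N (sub (fa_component d g) (fa_component d f)) \<le> N (sub g f)"
        using N_comp[of "sub g f" d] gf ff by simp
      then show "\<exists>f\<in>W. N (sub (fa_component d g) f) < e" using fW f(2) by force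
    qed
    have "fa_component d g \<in> W" by (rule CS[OF finSd neSd WV W0 Wadd Wsm gV ap])
    then show ?thesis by (simp add: W_def)
  qed
  have sums: "finite D' \<Longrightarrow> D' \<subseteq> D \<Longrightarrow> (\<lambda>w. if count_list w \<in> D' then g w else 0) \<in> Id_alg K sm" for D'
  proof (induction D' rule: finite_induct)
    case empty
    have "(\<lambda>w. if count_list w \<in> {} then g w else 0) = fa_zero" by (simp add: fa_zero_def)
    then show ?case using Id_zero by simp
  next
    case (insert d D')
    have eq: "(\<lambda>w. if count_list w \<in> insert d D' then g w else 0) =
          fa_add (fa_component d g) (\<lambda>w. if count_list w \<in> D' then g w else 0)"
      using insert(2) by (intro ext) (auto simp: comp_eq)
    have "fa_component d g \<in> Id_alg K sm" using compI insert by blast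
    moreover have "(\<lambda>w. if count_list w \<in> D' then g w else 0) \<in> Id_alg K sm" using insert by blast
    ultimately have "fa_add (fa_component d g) (\<lambda>w. if count_list w \<in> D' then g w else 0) \<in> Id_alg K sm"
      using Id_add by blast
    then show ?case unfolding eq .
  qed
  have "g = (\<lambda>w. if count_list w \<in> D then g w else 0)"
    by (auto simp: D_def S_def fun_eq_iff)
  also have "\<dots> \<in> Id_alg K sm" using sums finS by (simp add: D_def)
  finally show ?thesis .
qed

end

theorem proposition3p2:
  fixes K :: "complex set" and sm :: "complex \<Rightarrow> 'b::ring \<Rightarrow> 'b"
    and N :: "(nat list \<Rightarrow> complex) \<Rightarrow> real"
  assumes "is_R_or_C K"
    and "is_algebra_over K sm"
    and "is_PI_algebra K sm"
    and "is_MN_norm K N"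
  shows "is_fa_ideal K (Id_alg K sm) \<and> is_fa_closed K N (Id_alg K sm)"
proof -
  interpret fa_ctx K sm N using assms by (unfold_locales) auto
  show ?thesis using Id_ideal Id_closed by (auto simp: is_fa_closed_def)
qed


end
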